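(* In the setting below, for every probability measure $\mathbb{Q}$ on $\mathcal{F}$, $$\inf_{D}L_D(D,\mathbb{Q}) = a-\tfrac{a}{2}\,\big\|\mathbb{P}^+-\big(\gamma\mathbb{Q}+(1-\gamma)\mathbb{P}^-\big)\big\|_{TV},$$ the infimum being over measurable $D:\mathcal{F}\to[0,+\infty)$ and being attained by some $D$ with values in $[0,a]$. Moreover $\big\|\mathbb{P}^+-(\gamma\mathbb{Q}+(1-\gamma)\mathbb{P}^-)\big\|_{TV}\ge 2(1-\gamma)$ for every $\mathbb{Q}$, with equality when $\mathbb{Q}=\mathbb{P}^+$.
   Context: $(\mathcal{F},\Sigma)$ is a measurable space, $\mathbb{P}^+,\mathbb{P}^-$ are mutually singular probability measures on it (there is a measurable $S$ with $\mathbb{P}^+(S)=1$, $\mathbb{P}^-(S)=0$), $a>0$, $\gamma\in(0,1]$, and for measurable $D:\mathcal{F}\to[0,\infty)$ and probability measure $\mathbb{Q}$, $L_D(D,\mathbb{Q})=\mathbb{E}_{\mathbb{P}^+}D+\gamma\,\mathbb{E}_{\mathbb{Q}}\max(0,a-D)+(1-\gamma)\,\mathbb{E}_{\mathbb{P}^-}\max(0,a-D)$. For probability measures $\mathbb{P}_1,\mathbb{P}_2$, $\|\mathbb{P}_1-\mathbb{P}_2\|_{TV}$ is the total variation norm $|\mu|(\mathcal{F})$ of $\mu=\mathbb{P}_1-\mathbb{P}_2$ (equivalently $\int|p_1-p_2|\,d\nu$). *)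

theory Defs
  imports "HOL-Probability.Probability"
begin

definition meas_partitions :: "'a measure \<Rightarrow> 'a set set set" where
  "meas_partitions M = {P. finite P \<and> P \<subseteq> sets M \<and> disjoint P \<and> \<Union>P = space M}"

definition tv_norm :: "'a measure \<Rightarrow> ('a set \<Rightarrow> real) \<Rightarrow> real" where
  "tv_norm M \<mu> = (SUP P\<in>meas_partitions M. \<Sum>A\<in>P. \<bar>\<mu> A\<bar>)"

definition tv_dist :: "'a measure \<Rightarrow> ('a set \<Rightarrow> real) \<Rightarrow> ('a set \<Rightarrow> real) \<Rightarrow> real" where
  "tv_dist M P1 P2 = tv_norm M (\<lambda>A. P1 A - P2 A)"

definition loss_D :: "'a measure \<Rightarrow> 'a measure \<Rightarrow> real \<Rightarrow> real \<Rightarrow> ('a \<Rightarrow> real) \<Rightarrow> 'a measure \<Rightarrow> ennreal" where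
  "loss_D Pp Pm a \<gamma> D Q =
     (\<integral>\<^sup>+ x. ennreal (D x) \<partial>Pp)
     + ennreal \<gamma> * (\<integral>\<^sup>+ x. ennreal (max 0 (a - D x)) \<partial>Q)
     + ennreal (1 - \<gamma>) * (\<integral>\<^sup>+ x. ennreal (max 0 (a - D x)) \<partial>Pm)"

end

theory Submission
  imports Defs
begin

lemma sum3_measure:
  fixes A B C M :: "'a measure"
  assumes "sets A = sets M" "sets B = sets M" "sets C = sets M"
  defines "N \<equiv> measure_of (space M) (sets M) (\<lambda>X. emeasure A X + emeasure B X + emeasure C X)"
  shows "sets N = sets M" "space N = space M"
    "\<And>X. X \<in> sets M \<Longrightarrow> emeasure N X = emeasure A X + emeasure B X + emeasure C X"
proof -
  show "sets N = sets M" "space N = space M" by (auto simp: N_def)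
  fix X assume X: "X \<in> sets M"
  show "emeasure N X = emeasure A X + emeasure B X + emeasure C X"
    unfolding N_def
  proof (rule emeasure_measure_of_sigma)
    show "sigma_algebra (space M) (sets M)" ..
    show "positive (sets M) (\<lambda>X. emeasure A X + emeasure B X + emeasure C X)"
      by (simp add: positive_def)
    show "countably_additive (sets M) (\<lambda>X. emeasure A X + emeasure B X + emeasure C X)"
    proof (rule countably_additiveI)
      fix F :: "nat \<Rightarrow> _" assume F: "range F \<subseteq> sets M" "disjoint_family F"
      have "(\<Sum>i. emeasure A (F i) + emeasure B (F i) + emeasure C (F i))
         = (\<Sum>i. emeasure A (F i)) + (\<Sum>i. emeasure B (F i)) + (\<Sum>i. emeasure C (F i))"
        by (simp add: suminf_add[OF summableI summableI, symmetric])
      also have "\<dots> = emeasure A (\<Union>i. F i) + emeasure B (\<Union>i. F i) + emeasure C (\<Union>i. F i)"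
        using F assms(1-3) by (simp add: suminf_emeasure)
      finally show "(\<Sum>i. emeasure A (F i) + emeasure B (F i) + emeasure C (F i)) =
        emeasure A (\<Union>i. F i) + emeasure B (\<Union>i. F i) + emeasure C (\<Union>i. F i)" .
    qed
  qed fact
qed

lemma part_sum:
  assumes "prob_space X" "sets X = sets M" "Pt \<in> meas_partitions M" "H \<in> sets M"
  shows "(\<Sum>A\<in>Pt. measure X (A \<inter> H)) = measure X H"
proof -
  have Pt: "finite Pt" "Pt \<subseteq> sets M" "disjoint Pt" "\<Union>Pt = space M"
    using assms(3) by (auto simp: meas_partitions_def)
  have "H \<subseteq> space M" using assms(4) sets.sets_into_space by blast
  hence U: "(\<Union>A\<in>Pt. A \<inter> H) = H" using Pt(4) by blast
  have "measure X (\<Union>A\<in>Pt. A \<inter> H) = (\<Sum>A\<in>Pt. measure X (A \<inter> H))"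
  proof (rule finite_measure.finite_measure_finite_Union)
    show "finite_measure X" using assms(1) prob_space.axioms(1) by blast
    show "finite Pt" by fact
    show "(\<lambda>A. A \<inter> H) ` Pt \<subseteq> sets X" using Pt(2) assms(2,4) by auto
    show "disjoint_family_on (\<lambda>A. A \<inter> H) Pt" using Pt(3)
      unfolding disjoint_family_on_def disjoint_def by blast
  qed
  thus ?thesis using U by simp
qed

lemma part_sum_total:
  assumes "prob_space X" "sets X = sets M" "Pt \<in> meas_partitions M"
  shows "(\<Sum>A\<in>Pt. measure X A) = 1"
proof -
  have Pt: "\<Union>Pt = space M" "Pt \<subseteq> sets M" using assms(3) by (auto simp: meas_partitions_def)
  hence "\<And>A. A \<in> Pt \<Longrightarrow> A \<inter> space M = A" by blast
  hence "(\<Sum>A\<in>Pt. measure X A) = (\<Sum>A\<in>Pt. measure X (A \<inter> space M))" by simp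
  also have "\<dots> = measure X (space M)" by (rule part_sum[OF assms]) simp
  also have "\<dots> = 1" using assms(1,2) prob_space.prob_space sets_eq_imp_space_eq by metis
  finally show ?thesis .
qed


context
  fixes M Pp Q Pm :: "'a measure" and \<gamma> :: real
  assumes pP: "prob_space Pp" and pQ: "prob_space Q" and pM: "prob_space Pm"
    and sP: "sets Pp = sets M" and sQ: "sets Q = sets M" and sM: "sets Pm = sets M"
    and g0: "0 \<le> \<gamma>" and g1: "\<gamma> \<le> 1"
begin

lemma tv_sum_le2:
  assumes "Pt \<in> meas_partitions M"
  shows "(\<Sum>A\<in>Pt. \<bar>measure Pp A - (\<gamma> * measure Q A + (1 - \<gamma>) * measure Pm A)\<bar>) \<le> 2"
proof -
  have "(\<Sum>A\<in>Pt. \<bar>measure Pp A - (\<gamma> * measure Q A + (1 - \<gamma>) * measure Pm A)\<bar>)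
     \<le> (\<Sum>A\<in>Pt. measure Pp A + (\<gamma> * measure Q A + (1 - \<gamma>) * measure Pm A))"
    using g0 g1 by (intro sum_mono) (auto simp: abs_le_iff)
  also have "\<dots> = (\<Sum>A\<in>Pt. measure Pp A) + \<gamma> * (\<Sum>A\<in>Pt. measure Q A) + (1 - \<gamma>) * (\<Sum>A\<in>Pt. measure Pm A)"
    by (simp add: sum.distrib sum_distrib_left)
  also have "\<dots> = 2"
    using part_sum_total[OF pP sP assms] part_sum_total[OF pQ sQ assms] part_sum_total[OF pM sM assms]
    by simp
  finally show ?thesis .
qed

lemma tv_bdd: "bdd_above ((\<lambda>Pt. \<Sum>A\<in>Pt. \<bar>measure Pp A - (\<gamma> * measure Q A + (1 - \<gamma>) * measure Pm A)\<bar>) ` meas_partitions M)"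
  using tv_sum_le2 by (intro bdd_aboveI2) 

lemma space_part: "{space M} \<in> meas_partitions M"
  by (auto simp: meas_partitions_def disjoint_def)

lemma two_part: "S \<in> sets M \<Longrightarrow> {S, space M - S} \<in> meas_partitions M"
  using sets.sets_into_space by (auto simp: meas_partitions_def disjoint_def)

lemma tv_lower:
  assumes "S \<in> sets M" "measure Pp S = 1" "measure Pm S = 0"
  shows "tv_dist M (measure Pp) (\<lambda>A. \<gamma> * measure Q A + (1 - \<gamma>) * measure Pm A) \<ge> 2 * (1 - \<gamma>)"
proof -
  let ?f = "\<lambda>Pt. \<Sum>A\<in>Pt. \<bar>measure Pp A - (\<gamma> * measure Q A + (1 - \<gamma>) * measure Pm A)\<bar>"
  have sp: "space Pp = space M" "space Q = space M" "space Pm = space M"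
    using sP sQ sM sets_eq_imp_space_eq by blast+
  have ne: "S \<noteq> space M - S"
  proof
    assume "S = space M - S" hence "S = {}" by blast
    with assms(2) show False by simp
  qed
  have c1: "measure Pp (space M - S) = 0"
    using prob_space.prob_compl[OF pP, of S] assms sP sp by simp
  have c2: "measure Pm (space M - S) = 1"
    using prob_space.prob_compl[OF pM, of S] assms sM sp by simp
  have q1: "measure Q S \<le> 1" "measure Q (space M - S) \<le> 1"
    using prob_space.prob_le_1[OF pQ] by auto
  have "2 * (1 - \<gamma>) \<le> ?f {S, space M - S}"
  proof -
    have "?f {S, space M - S} = \<bar>1 - (\<gamma> * measure Q S)\<bar> + \<bar>0 - (\<gamma> * measure Q (space M - S) + (1 - \<gamma>))\<bar>"
      using ne assms c1 c2 by simp
    moreover have "1 - \<gamma> \<le> \<bar>1 - (\<gamma> * measure Q S)\<bar>"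
      using q1 g0 g1 mult_left_mono[OF q1(1) g0] by linarith
    moreover have "1 - \<gamma> \<le> \<bar>0 - (\<gamma> * measure Q (space M - S) + (1 - \<gamma>))\<bar>"
      using g0 g1 mult_nonneg_nonneg[OF g0 measure_nonneg[of Q "space M - S"]]
        abs_ge_minus_self[of "0 - (\<gamma> * measure Q (space M - S) + (1 - \<gamma>))"] by linarith
    ultimately show ?thesis by (smt (verit))
  qed
  also have "\<dots> \<le> (SUP Pt\<in>meas_partitions M. ?f Pt)"
    by (rule cSUP_upper[OF two_part[OF assms(1)] tv_bdd])
  finally show ?thesis by (simp add: tv_dist_def tv_norm_def)
qed

lemma tv_hahn:
  assumes H: "H \<in> sets M"
    and le: "\<And>B. B \<in> sets M \<Longrightarrow> B \<subseteq> H \<Longrightarrow> measure Pp B \<le> \<gamma> * measure Q B + (1 - \<gamma>) * measure Pm B"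
    and ge: "\<And>B. B \<in> sets M \<Longrightarrow> B \<inter> H = {} \<Longrightarrow> measure Pp B \<ge> \<gamma> * measure Q B + (1 - \<gamma>) * measure Pm B"
  shows "tv_dist M (measure Pp) (\<lambda>A. \<gamma> * measure Q A + (1 - \<gamma>) * measure Pm A)
       = 2 * ((\<gamma> * measure Q H + (1 - \<gamma>) * measure Pm H) - measure Pp H)"
proof -
  let ?r = "\<lambda>A. \<gamma> * measure Q A + (1 - \<gamma>) * measure Pm A"
  let ?f = "\<lambda>Pt. \<Sum>A\<in>Pt. \<bar>measure Pp A - ?r A\<bar>"
  let ?v = "2 * (?r H - measure Pp H)"
  have sp: "space Pp = space M" "space Q = space M" "space Pm = space M"
    using sP sQ sM sets_eq_imp_space_eq by blast+
  have HC: "space M - H \<in> sets M" using H by auto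
  have cP: "measure Pp (space M - H) = 1 - measure Pp H"
    using prob_space.prob_compl[OF pP, of H] H sP sp by simp
  have cQ: "measure Q (space M - H) = 1 - measure Q H"
    using prob_space.prob_compl[OF pQ, of H] H sQ sp by simp
  have cM: "measure Pm (space M - H) = 1 - measure Pm H"
    using prob_space.prob_compl[OF pM, of H] H sM sp by simp
  have fP: "finite_measure Pp" "finite_measure Q" "finite_measure Pm"
    using pP pQ pM prob_space.axioms(1) by blast+
  have upper: "?f Pt \<le> ?v" if Pt: "Pt \<in> meas_partitions M" for Pt
  proof -
    have PtS: "Pt \<subseteq> sets M" using Pt by (auto simp: meas_partitions_def)
    have "?f Pt \<le> (\<Sum>A\<in>Pt. (?r (A \<inter> H) - measure Pp (A \<inter> H)) + (measure Pp (A \<inter> (space M - H)) - ?r (A \<inter> (space M - H))))"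
    proof (rule sum_mono)
      fix A assume A: "A \<in> Pt"
      hence AS: "A \<in> sets M" "A \<subseteq> space M" using PtS sets.sets_into_space by auto
      have d: "A - H = A \<inter> (space M - H)" using AS by blast
      have spl: "measure X A = measure X (A \<inter> H) + measure X (A \<inter> (space M - H))"
        if "finite_measure X" "sets X = sets M" for X
        using that AS H by (simp add: d[symmetric] finite_measure.finite_measure_Diff')
      have l1: "measure Pp (A \<inter> H) \<le> ?r (A \<inter> H)" using AS H by (intro le) auto
      have l2: "measure Pp (A \<inter> (space M - H)) \<ge> ?r (A \<inter> (space M - H))" using AS H by (intro ge) auto
      show "\<bar>measure Pp A - ?r A\<bar> \<le> (?r (A \<inter> H) - measure Pp (A \<inter> H)) + (measure Pp (A \<inter> (space M - H)) - ?r (A \<inter> (space M - H)))"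
        using spl[OF fP(1) sP] spl[OF fP(2) sQ] spl[OF fP(3) sM] l1 l2
        by (simp add: algebra_simps abs_le_iff)
    qed
    also have "\<dots> = (?r H - measure Pp H) + (measure Pp (space M - H) - ?r (space M - H))"
      using part_sum[OF pP sP Pt H] part_sum[OF pQ sQ Pt H] part_sum[OF pM sM Pt H]
        part_sum[OF pP sP Pt HC] part_sum[OF pQ sQ Pt HC] part_sum[OF pM sM Pt HC]
      by (simp add: sum.distrib sum_subtractf sum_distrib_left[symmetric])
    also have "\<dots> = ?v" unfolding cP cQ cM by (simp add: algebra_simps)
    finally show ?thesis .
  qed
  have lower: "?v \<le> ?f {H, space M - H}"
  proof (cases "H = space M - H")
    case True
    hence "H = {}" by blast
    thus ?thesis by simp
  next
    case False
    have "?f {H, space M - H} = \<bar>measure Pp H - ?r H\<bar> + \<bar>measure Pp (space M - H) - ?r (space M - H)\<bar>"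
      using False by simp
    thus ?thesis using cP cQ cM by (simp add: algebra_simps abs_le_iff)
  qed
  have "(SUP Pt\<in>meas_partitions M. ?f Pt) = ?v"
  proof (rule antisym)
    show "(SUP Pt\<in>meas_partitions M. ?f Pt) \<le> ?v"
      using upper space_part by (intro cSUP_least) auto
    show "?v \<le> (SUP Pt\<in>meas_partitions M. ?f Pt)"
      using lower cSUP_upper[OF two_part[OF H] tv_bdd] by linarith
  qed
  thus ?thesis by (simp add: tv_dist_def tv_norm_def)
qed

lemma tv_same_le:
  "tv_dist M (measure Pp) (\<lambda>A. \<gamma> * measure Pp A + (1 - \<gamma>) * measure Pm A) \<le> 2 * (1 - \<gamma>)"
proof -
  have "(\<Sum>A\<in>Pt. \<bar>measure Pp A - (\<gamma> * measure Pp A + (1 - \<gamma>) * measure Pm A)\<bar>) \<le> 2 * (1 - \<gamma>)"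
    if Pt: "Pt \<in> meas_partitions M" for Pt
  proof -
    have "(\<Sum>A\<in>Pt. \<bar>measure Pp A - (\<gamma> * measure Pp A + (1 - \<gamma>) * measure Pm A)\<bar>)
       \<le> (\<Sum>A\<in>Pt. (1 - \<gamma>) * measure Pp A + (1 - \<gamma>) * measure Pm A)"
    proof (rule sum_mono)
      fix A
      have "\<bar>measure Pp A - (\<gamma> * measure Pp A + (1 - \<gamma>) * measure Pm A)\<bar>
          = (1 - \<gamma>) * \<bar>measure Pp A - measure Pm A\<bar>"
      proof -
        have "measure Pp A - (\<gamma> * measure Pp A + (1 - \<gamma>) * measure Pm A) = (1 - \<gamma>) * (measure Pp A - measure Pm A)"
          by (simp add: algebra_simps)
        thus ?thesis using g1 by (simp add: abs_mult)
      qed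
      also have "\<dots> \<le> (1 - \<gamma>) * (measure Pp A + measure Pm A)"
        using g1 by (intro mult_left_mono) (auto simp: abs_le_iff)
      finally show "\<bar>measure Pp A - (\<gamma> * measure Pp A + (1 - \<gamma>) * measure Pm A)\<bar>
          \<le> (1 - \<gamma>) * measure Pp A + (1 - \<gamma>) * measure Pm A" by (simp add: algebra_simps)
    qed
    also have "\<dots> = (1 - \<gamma>) * (\<Sum>A\<in>Pt. measure Pp A) + (1 - \<gamma>) * (\<Sum>A\<in>Pt. measure Pm A)"
      by (simp add: sum.distrib sum_distrib_left)
    also have "\<dots> = 2 * (1 - \<gamma>)"
      using part_sum_total[OF pP sP Pt] part_sum_total[OF pM sM Pt] by simp
    finally show ?thesis .
  qed
  thus ?thesis unfolding tv_dist_def tv_norm_def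
    using space_part by (intro cSUP_least) auto
qed

end

theorem mainTheorem3:
  fixes M Pp Pm Q :: "'a measure" and a \<gamma> :: real
  assumes "prob_space Pp" "prob_space Pm" "prob_space Q"
    and "sets Pp = sets M" "sets Pm = sets M" "sets Q = sets M"
    and "\<exists>S\<in>sets M. prob_space.prob Pp S = 1 \<and> prob_space.prob Pm S = 0"
    and "a > 0" "0 < \<gamma>" "\<gamma> \<le> 1"
  shows "(INF D\<in>{D \<in> borel_measurable M. \<forall>x\<in>space M. 0 \<le> D x}. loss_D Pp Pm a \<gamma> D Q)
           = ennreal (a - a / 2 * tv_dist M (measure Pp)
                 (\<lambda>A. \<gamma> * measure Q A + (1 - \<gamma>) * measure Pm A)) \<and>
         (\<exists>D \<in> borel_measurable M. (\<forall>x\<in>space M. 0 \<le> D x \<and> D x \<le> a) \<and>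
           loss_D Pp Pm a \<gamma> D Q = ennreal (a - a / 2 * tv_dist M (measure Pp)
                 (\<lambda>A. \<gamma> * measure Q A + (1 - \<gamma>) * measure Pm A))) \<and>
         tv_dist M (measure Pp) (\<lambda>A. \<gamma> * measure Q A + (1 - \<gamma>) * measure Pm A) \<ge> 2 * (1 - \<gamma>) \<and>
         tv_dist M (measure Pp) (\<lambda>A. \<gamma> * measure Pp A + (1 - \<gamma>) * measure Pm A) = 2 * (1 - \<gamma>)"
proof -
  note pP = assms(1) and pM = assms(2) and pQ = assms(3)
  note sP = assms(4) and sM = assms(5) and sQ = assms(6)
  have g0: "0 \<le> \<gamma>" and g1: "\<gamma> \<le> 1" using assms(9,10) by auto
  interpret P: prob_space Pp by fact
  interpret Qm: prob_space Q by fact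
  interpret Mm: prob_space Pm by fact
  obtain S where S: "S \<in> sets M" "measure Pp S = 1" "measure Pm S = 0"
    using assms(7) by auto
  have sp: "space Pp = space M" "space Q = space M" "space Pm = space M"
    using sP sQ sM sets_eq_imp_space_eq by blast+
  let ?rho = "\<lambda>A. \<gamma> * measure Q A + (1 - \<gamma>) * measure Pm A"
  have part3: "tv_dist M (measure Pp) ?rho \<ge> 2 * (1 - \<gamma>)"
    by (rule tv_lower[OF pP pQ pM sP sQ sM g0 g1 S])
  have part4: "tv_dist M (measure Pp) (\<lambda>A. \<gamma> * measure Pp A + (1 - \<gamma>) * measure Pm A) = 2 * (1 - \<gamma>)"
    using tv_lower[OF pP pP pM sP sP sM g0 g1 S] tv_same_le[OF pP pQ pM sP sQ sM g0 g1] by linarith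
  define N where "N = measure_of (space M) (sets M) (\<lambda>X. emeasure Pp X + emeasure Q X + emeasure Pm X)"
  have sN: "sets N = sets M" and spN: "space N = space M"
    and eN: "\<And>X. X \<in> sets M \<Longrightarrow> emeasure N X = emeasure Pp X + emeasure Q X + emeasure Pm X"
    using sum3_measure[OF sP sQ sM] unfolding N_def by auto
  have "emeasure N (space N) \<noteq> \<infinity>"
    using eN[of "space M"] spN sp by (simp add: P.emeasure_space_1 Qm.emeasure_space_1 Mm.emeasure_space_1)
  then interpret N: finite_measure N by (rule finite_measureI)
  have ac: "absolutely_continuous N X" if "X = Pp \<or> X = Q \<or> X = Pm" for X
    unfolding absolutely_continuous_def
  proof
    fix A assume "A \<in> null_sets N"
    hence A: "A \<in> sets M" "emeasure N A = 0" using sN by auto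
    hence "emeasure X A = 0" using eN[OF A(1)] that by auto
    thus "A \<in> null_sets X" using A that sP sQ sM by auto
  qed
  have BM: "(borel_measurable N :: ('a \<Rightarrow> ennreal) set) = borel_measurable M"
    "(borel_measurable N :: ('a \<Rightarrow> real) set) = borel_measurable M"
    by (rule measurable_cong_sets[OF sN refl])+
  obtain p where p: "p \<in> borel_measurable N" "density N p = Pp"
    using N.Radon_Nikodym[OF ac[of Pp]] sP sN by auto
  obtain q where q: "q \<in> borel_measurable N" "density N q = Q"
    using N.Radon_Nikodym[OF ac[of Q]] sQ sN by auto
  obtain m where m: "m \<in> borel_measurable N" "density N m = Pm"
    using N.Radon_Nikodym[OF ac[of Pm]] sM sN by auto
  have [measurable]: "p \<in> borel_measurable M" "q \<in> borel_measurable M" "m \<in> borel_measurable M"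
    using p q m BM by auto
  have int: "(\<integral>\<^sup>+x. f x \<partial>X) = (\<integral>\<^sup>+x. d x * f x \<partial>N)"
    if "f \<in> borel_measurable M" "d \<in> borel_measurable N" "density N d = X" for f d X
  proof -
    have "f \<in> borel_measurable N" using that BM by simp
    from nn_integral_density[OF that(2) this] that(3) show ?thesis by simp
  qed
  define r where "r x = ennreal \<gamma> * q x + ennreal (1 - \<gamma>) * m x" for x
  have [measurable]: "r \<in> borel_measurable M" unfolding r_def by measurable
  define H where "H = {x \<in> space M. p x < r x}"
  have H: "H \<in> sets M" unfolding H_def by measurable
  have loss: "loss_D Pp Pm a \<gamma> D Q
      = (\<integral>\<^sup>+x. ennreal (D x) * p x + ennreal (max 0 (a - D x)) * r x \<partial>N)"
    if D: "D \<in> borel_measurable M" for D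
  proof -
    have [measurable]: "D \<in> borel_measurable M" by fact
    have [measurable]: "D \<in> borel_measurable N" using D BM by simp
    have [measurable]: "p \<in> borel_measurable N" "q \<in> borel_measurable N" "m \<in> borel_measurable N"
      using p q m by auto
    have "loss_D Pp Pm a \<gamma> D Q = (\<integral>\<^sup>+x. p x * ennreal (D x) \<partial>N)
        + ennreal \<gamma> * (\<integral>\<^sup>+x. q x * ennreal (max 0 (a - D x)) \<partial>N)
        + ennreal (1 - \<gamma>) * (\<integral>\<^sup>+x. m x * ennreal (max 0 (a - D x)) \<partial>N)"
      unfolding loss_D_def
      by (subst int[OF _ p(1,2)], measurable, subst int[OF _ q(1,2)], measurable,
          subst int[OF _ m(1,2)], measurable)
    also have "\<dots> = (\<integral>\<^sup>+x. p x * ennreal (D x) \<partial>N)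
        + (\<integral>\<^sup>+x. ennreal \<gamma> * (q x * ennreal (max 0 (a - D x))) \<partial>N)
        + (\<integral>\<^sup>+x. ennreal (1 - \<gamma>) * (m x * ennreal (max 0 (a - D x))) \<partial>N)"
      by (simp add: nn_integral_cmult)
    also have "\<dots> = (\<integral>\<^sup>+x. p x * ennreal (D x) + ennreal \<gamma> * (q x * ennreal (max 0 (a - D x)))
          + ennreal (1 - \<gamma>) * (m x * ennreal (max 0 (a - D x))) \<partial>N)"
      by (simp add: nn_integral_add)
    also have "\<dots> = (\<integral>\<^sup>+x. ennreal (D x) * p x + ennreal (max 0 (a - D x)) * r x \<partial>N)"
      by (rule nn_integral_cong) (simp add: r_def algebra_simps)
    finally show ?thesis .
  qed
  define D0 where "D0 x = a * indicator H x" for x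
  have D0m: "D0 \<in> borel_measurable M" unfolding D0_def using H by measurable
  have D0b: "\<forall>x\<in>space M. 0 \<le> D0 x \<and> D0 x \<le> a" using assms(8) by (auto simp: D0_def indicator_def)
  have pw: "ennreal (D0 x) * p x + ennreal (max 0 (a - D0 x)) * r x
      \<le> ennreal (D x) * p x + ennreal (max 0 (a - D x)) * r x"
    if x: "x \<in> space M" and Dx: "0 \<le> D x" for x and D :: "'a \<Rightarrow> real"
  proof -
    define g where "g = max 0 (a - D x)"
    have gn: "0 \<le> g" by (simp add: g_def)
    have sum: "ennreal a \<le> ennreal (D x) + ennreal g"
      using Dx gn by (simp add: ennreal_plus[symmetric] del: ennreal_plus) (simp add: g_def)
    show ?thesis
    proof (cases "x \<in> H")
      case True
      hence pr: "p x \<le> r x" by (simp add: H_def less_imp_le)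
      have "ennreal (D0 x) * p x + ennreal (max 0 (a - D0 x)) * r x = ennreal a * p x"
        using True by (simp add: D0_def)
      also have "\<dots> \<le> (ennreal (D x) + ennreal g) * p x" by (rule mult_right_mono[OF sum]) simp
      also have "\<dots> = ennreal (D x) * p x + ennreal g * p x" by (simp add: distrib_right)
      also have "\<dots> \<le> ennreal (D x) * p x + ennreal g * r x"
        by (intro add_left_mono mult_left_mono pr) simp
      finally show ?thesis by (simp add: g_def)
    next
      case False
      hence pr: "r x \<le> p x" using x by (auto simp: H_def not_less)
      have "ennreal (D0 x) * p x + ennreal (max 0 (a - D0 x)) * r x = ennreal a * r x"
        using False assms(8) by (simp add: D0_def max_def)
      also have "\<dots> \<le> (ennreal (D x) + ennreal g) * r x" by (rule mult_right_mono[OF sum]) simp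
      also have "\<dots> = ennreal (D x) * r x + ennreal g * r x" by (simp add: distrib_right)
      also have "\<dots> \<le> ennreal (D x) * p x + ennreal g * r x"
        by (intro add_right_mono mult_left_mono pr) simp
      finally show ?thesis by (simp add: g_def)
    qed
  qed
  have lower: "loss_D Pp Pm a \<gamma> D0 Q \<le> loss_D Pp Pm a \<gamma> D Q"
    if "D \<in> borel_measurable M" "\<forall>x\<in>space M. 0 \<le> D x" for D
    unfolding loss[OF D0m] loss[OF that(1)]
    using that(2) spN by (intro nn_integral_mono pw) auto
  have INFeq: "(INF D\<in>{D \<in> borel_measurable M. \<forall>x\<in>space M. 0 \<le> D x}. loss_D Pp Pm a \<gamma> D Q)
      = loss_D Pp Pm a \<gamma> D0 Q"
  proof (rule antisym)
    show "(INF D\<in>{D \<in> borel_measurable M. \<forall>x\<in>space M. 0 \<le> D x}. loss_D Pp Pm a \<gamma> D Q)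
      \<le> loss_D Pp Pm a \<gamma> D0 Q" using D0m D0b by (intro INF_lower) auto
    show "loss_D Pp Pm a \<gamma> D0 Q
      \<le> (INF D\<in>{D \<in> borel_measurable M. \<forall>x\<in>space M. 0 \<le> D x}. loss_D Pp Pm a \<gamma> D Q)"
      using lower by (intro INF_greatest) auto
  qed
  have HC: "space M - H \<in> sets M" using H by auto
  have i1: "(\<integral>\<^sup>+x. ennreal (D0 x) \<partial>Pp) = ennreal a * emeasure Pp H"
  proof -
    have "(\<integral>\<^sup>+x. ennreal (D0 x) \<partial>Pp) = (\<integral>\<^sup>+x. ennreal a * indicator H x \<partial>Pp)"
      by (rule nn_integral_cong) (auto simp: D0_def split: split_indicator)
    also have "\<dots> = ennreal a * emeasure Pp H" using H sP by (simp add: nn_integral_cmult_indicator)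
    finally show ?thesis .
  qed
  have i2: "(\<integral>\<^sup>+x. ennreal (max 0 (a - D0 x)) \<partial>X) = ennreal a * emeasure X (space M - H)"
    if "sets X = sets M" for X
  proof -
    have "space X = space M" using that sets_eq_imp_space_eq by blast
    hence "(\<integral>\<^sup>+x. ennreal (max 0 (a - D0 x)) \<partial>X) = (\<integral>\<^sup>+x. ennreal a * indicator (space M - H) x \<partial>X)"
      using assms(8) by (intro nn_integral_cong) (auto simp: D0_def split: split_indicator)
    also have "\<dots> = ennreal a * emeasure X (space M - H)" using HC that by (simp add: nn_integral_cmult_indicator)
    finally show ?thesis .
  qed
  have lossD0: "loss_D Pp Pm a \<gamma> D0 Q = ennreal (a * measure Pp H + \<gamma> * (a * measure Q (space M - H))
      + (1 - \<gamma>) * (a * measure Pm (space M - H)))"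
    unfolding loss_D_def i1 i2[OF sQ] i2[OF sM]
    using assms(8) g0 g1
    by (simp add: P.emeasure_eq_measure Qm.emeasure_eq_measure Mm.emeasure_eq_measure ennreal_mult'')
  have [measurable]: "p \<in> borel_measurable N" "q \<in> borel_measurable N" "m \<in> borel_measurable N"
    "r \<in> borel_measurable N"
    using p q m BM by auto
  have eP: "emeasure Pp B = (\<integral>\<^sup>+x. p x * indicator B x \<partial>N)" if "B \<in> sets M" for B
    using emeasure_density[OF p(1), of B] p(2) that sN by simp
  have eR: "ennreal (?rho B) = (\<integral>\<^sup>+x. r x * indicator B x \<partial>N)" if B: "B \<in> sets M" for B
  proof -
    have [measurable]: "B \<in> sets N" using B sN by simp
    have "ennreal (?rho B) = ennreal \<gamma> * emeasure Q B + ennreal (1 - \<gamma>) * emeasure Pm B"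
      using g0 g1 by (simp add: Qm.emeasure_eq_measure Mm.emeasure_eq_measure ennreal_mult'')
    also have "\<dots> = ennreal \<gamma> * (\<integral>\<^sup>+x. q x * indicator B x \<partial>N) + ennreal (1 - \<gamma>) * (\<integral>\<^sup>+x. m x * indicator B x \<partial>N)"
      using emeasure_density[OF q(1), of B] q(2) emeasure_density[OF m(1), of B] m(2) sN B by simp
    also have "\<dots> = (\<integral>\<^sup>+x. ennreal \<gamma> * (q x * indicator B x) \<partial>N) + (\<integral>\<^sup>+x. ennreal (1 - \<gamma>) * (m x * indicator B x) \<partial>N)"
      by (simp add: nn_integral_cmult)
    also have "\<dots> = (\<integral>\<^sup>+x. ennreal \<gamma> * (q x * indicator B x) + ennreal (1 - \<gamma>) * (m x * indicator B x) \<partial>N)"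
      by (simp add: nn_integral_add)
    also have "\<dots> = (\<integral>\<^sup>+x. r x * indicator B x \<partial>N)"
      by (rule nn_integral_cong) (simp add: r_def algebra_simps)
    finally show ?thesis .
  qed
  have rho_nn: "0 \<le> ?rho B" for B using g0 g1 by simp
  have hle: "measure Pp B \<le> ?rho B" if "B \<in> sets M" "B \<subseteq> H" for B
  proof -
    have "emeasure Pp B \<le> ennreal (?rho B)"
      unfolding eP[OF that(1)] eR[OF that(1)]
      using that(2) by (intro nn_integral_mono) (auto simp: H_def split: split_indicator)
    thus ?thesis using rho_nn[of B] by (simp add: P.emeasure_eq_measure)
  qed
  have hge: "measure Pp B \<ge> ?rho B" if "B \<in> sets M" "B \<inter> H = {}" for B
  proof -
    have "ennreal (?rho B) \<le> emeasure Pp B"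
      unfolding eP[OF that(1)] eR[OF that(1)]
      using that(2) spN by (intro nn_integral_mono) (auto simp: H_def not_less split: split_indicator)
    thus ?thesis by (simp add: P.emeasure_eq_measure)
  qed
  have tv: "tv_dist M (measure Pp) ?rho = 2 * (?rho H - measure Pp H)"
    by (rule tv_hahn[OF pP pQ pM sP sQ sM g0 g1 H hle hge])
  have cQ: "measure Q (space M - H) = 1 - measure Q H"
    using Qm.prob_compl[of H] H sQ sp by simp
  have cM: "measure Pm (space M - H) = 1 - measure Pm H"
    using Mm.prob_compl[of H] H sM sp by simp
  have val: "a * measure Pp H + \<gamma> * (a * measure Q (space M - H)) + (1 - \<gamma>) * (a * measure Pm (space M - H))
      = a - a / 2 * tv_dist M (measure Pp) ?rho"
    unfolding tv cQ cM by (simp add: algebra_simps)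
  show ?thesis
    using INFeq lossD0 val D0m D0b part3 part4 by auto
qed

end
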